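(* Let $n,m,k,r$ be positive integers. Then \[S_{\leq m}(n,k,r)=\sum_{i=0}^{m-1}\binom{n-1}{i}\Big((k-1)\,S_{\leq m}(n-i-1,k-1,r)+S_{\leq m}(n-i-1,k,r-1)\Big),\] where summands with $i>n-1$ (for which $\binom{n-1}{i}=0$) are $0$, and when $k=1$ the term $(k-1)S_{\leq m}(n-i-1,k-1,r)$ is $0$.
   Context: For integers $N\ge 0$, $k\ge1$, $r\ge 0$, $m\ge1$, $S_{\leq m}(N,k,r)$ is the number of ways to partition $[N]=\{1,\dots,N\}$ into $r+k-1$ non-empty blocks, each of size at most $m$, where $r$ of the blocks receive the label $1$ (blocks with label $1$ are indistinguishable among themselves) and the remaining $k-1$ blocks receive the distinct labels $2,3,\dots,k$. (In particular $S_{\leq m}(0,1,0)=1$.) *)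

theory Defs
  imports Main "HOL-Library.Disjoint_Sets"
begin

text \<open>A labelled partition of {1..N}: a set U of r blocks with label 1 (unordered),
  and an injective assignment f of the distinct labels 2..k to further blocks
  (f is fixed to the empty set outside {2..k} so that each object is counted once).\<close>

definition labelled_partitions :: "nat \<Rightarrow> nat \<Rightarrow> nat \<Rightarrow> nat \<Rightarrow> (nat set set \<times> (nat \<Rightarrow> nat set)) set" where
  "labelled_partitions m N k r =
     {(U, f). partition_on {1..N} (U \<union> f ` {2..k})
            \<and> finite U \<and> card U = r
            \<and> inj_on f {2..k}
            \<and> U \<inter> f ` {2..k} = {}
            \<and> (\<forall>B \<in> U \<union> f ` {2..k}. card B \<le> m)
            \<and> (\<forall>i. i \<notin> {2..k} \<longrightarrow> f i = {})}"

definition S_le :: "nat \<Rightarrow> nat \<Rightarrow> nat \<Rightarrow> nat \<Rightarrow> nat" where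
  "S_le m N k r = card (labelled_partitions m N k r)"

end

theory Submission
  imports Defs
begin
definition GLP :: "nat \<Rightarrow> nat set \<Rightarrow> nat set \<Rightarrow> nat \<Rightarrow> (nat set set \<times> (nat \<Rightarrow> nat set)) set" where
  "GLP m A L r =
     {(U, f). partition_on A (U \<union> f ` L)
            \<and> finite U \<and> card U = r
            \<and> inj_on f L
            \<and> U \<inter> f ` L = {}
            \<and> (\<forall>B \<in> U \<union> f ` L. card B \<le> m)
            \<and> (\<forall>i. i \<notin> L \<longrightarrow> f i = {})}"

lemma LP_GLP: "labelled_partitions m N k r = GLP m {1..N} {2..k} r"
  unfolding labelled_partitions_def GLP_def by simp

lemma finite_GLP:
  assumes "finite A" "finite L"
  shows "finite (GLP m A L r)"
proof -
  have "GLP m A L r \<subseteq> Pow (Pow A) \<times> {f. \<forall>x. (x \<in> L \<longrightarrow> f x \<in> Pow A) \<and> (x \<notin> L \<longrightarrow> f x = {})}"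
    unfolding GLP_def by (auto dest: partition_onD1)
  moreover have "finite (Pow (Pow A) \<times> {f. \<forall>x. (x \<in> L \<longrightarrow> f x \<in> Pow A) \<and> (x \<notin> L \<longrightarrow> f x = {})})"
    using assms by (intro finite_cartesian_product finite_set_of_finite_funs) auto
  ultimately show ?thesis by (rule finite_subset)
qed

definition relab :: "(nat \<Rightarrow> nat) \<Rightarrow> (nat \<Rightarrow> nat) \<Rightarrow> nat set \<Rightarrow> (nat set set \<times> (nat \<Rightarrow> nat set)) \<Rightarrow> (nat set set \<times> (nat \<Rightarrow> nat set))" where
  "relab g hi L' x = ((`) g ` fst x, \<lambda>i. if i \<in> L' then g ` snd x (hi i) else {})"

lemma relab_in:
  assumes g: "bij_betw g A A'" and h: "bij_betw hi L' L" and x: "(U, f) \<in> GLP m A L r"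
  shows "relab g hi L' (U, f) \<in> GLP m A' L' r"
proof -
  from x have P: "partition_on A (U \<union> f ` L)" and fU: "finite U" and cU: "card U = r"
    and inj: "inj_on f L" and dis: "U \<inter> f ` L = {}" and cB: "\<forall>B \<in> U \<union> f ` L. card B \<le> m"
    and out: "\<forall>i. i \<notin> L \<longrightarrow> f i = {}"
    unfolding GLP_def by auto
  have sub: "U \<union> f ` L \<subseteq> Pow A" using partition_onD1[OF P] by auto
  have ig: "inj_on g A" using g by (simp add: bij_betw_def)
  have iP: "inj_on ((`) g) (Pow A)" using inj_on_image_Pow[OF ig] .
  have hL: "hi ` L' = L" using h by (simp add: bij_betw_def)
  define f' where "f' = (\<lambda>i. if i \<in> L' then g ` f (hi i) else {})"
  have f'L: "f' ` L' = (`) g ` (f ` L)"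
    unfolding f'_def using hL by (auto simp: image_image)
  have un: "(`) g ` U \<union> f' ` L' = (`) g ` (U \<union> f ` L)" using f'L by auto
  have P': "partition_on A' ((`) g ` U \<union> f' ` L')"
  proof -
    have "partition_on (g ` A) ((`) g ` (U \<union> f ` L) - {{}})"
      by (rule partition_on_inj_image[OF P ig])
    moreover have "(`) g ` (U \<union> f ` L) - {{}} = (`) g ` (U \<union> f ` L)"
      using partition_onD3[OF P] by auto
    moreover have "g ` A = A'" using g by (simp add: bij_betw_def)
    ultimately show ?thesis using un by simp
  qed
  have cU': "card ((`) g ` U) = r"
    using cU card_image[OF inj_on_subset[OF iP]] sub by auto
  have inj': "inj_on f' L'"
  proof (rule inj_onI)
    fix i j assume i: "i \<in> L'" and j: "j \<in> L'" and e: "f' i = f' j"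
    have "hi i \<in> L" "hi j \<in> L" using i j hL by auto
    hence "f (hi i) \<in> Pow A" "f (hi j) \<in> Pow A" using sub by auto
    with e i j iP have "f (hi i) = f (hi j)" unfolding f'_def by (auto dest: inj_onD)
    with inj \<open>hi i \<in> L\<close> \<open>hi j \<in> L\<close> have "hi i = hi j" by (auto dest: inj_onD)
    with h i j show "i = j" by (auto simp: bij_betw_def dest: inj_onD)
  qed
  have dis': "(`) g ` U \<inter> f' ` L' = {}"
  proof -
    have "(`) g ` U \<inter> (`) g ` (f ` L) = (`) g ` (U \<inter> f ` L)"
      using inj_on_image_Int[OF iP] sub by auto
    thus ?thesis using f'L dis by simp
  qed
  have cB': "\<forall>B \<in> (`) g ` U \<union> f' ` L'. card B \<le> m"
  proof
    fix B assume "B \<in> (`) g ` U \<union> f' ` L'"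
    then obtain C where C: "C \<in> U \<union> f ` L" "B = g ` C" using un by auto
    have "inj_on g C" using ig C sub by (auto intro: inj_on_subset)
    hence "card B = card C" using C card_image by simp
    thus "card B \<le> m" using C cB by simp
  qed
  have out': "\<forall>i. i \<notin> L' \<longrightarrow> f' i = {}" unfolding f'_def by auto
  have "relab g hi L' (U, f) = ((`) g ` U, f')" unfolding relab_def f'_def fst_conv snd_conv ..
  moreover have "((`) g ` U, f') \<in> GLP m A' L' r"
    unfolding GLP_def using P' fU cU' inj' dis' cB' out' by simp
  ultimately show ?thesis by simp
qed

lemma relab_inv:
  assumes x: "x \<in> GLP m A L r"
    and g2: "\<And>y. y \<in> A \<Longrightarrow> g2 (g y) = y"
    and h2: "\<And>i. i \<in> L \<Longrightarrow> h2 i \<in> L' \<and> hi (h2 i) = i"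
  shows "relab g2 h2 L (relab g hi L' x) = x"
proof -
  obtain U f where xe: "x = (U, f)" by (cases x)
  from x xe have P: "partition_on A (U \<union> f ` L)" and out: "\<forall>i. i \<notin> L \<longrightarrow> f i = {}"
    unfolding GLP_def by auto
  have sub: "U \<union> f ` L \<subseteq> Pow A" using partition_onD1[OF P] by auto
  have cancel: "g2 ` g ` C = C" if "C \<subseteq> A" for C
  proof -
    have "g2 ` g ` C = (\<lambda>y. g2 (g y)) ` C" by (simp add: image_image)
    also have "\<dots> = (\<lambda>y. y) ` C"
      by (rule image_cong[OF refl]) (use that g2 in blast)
    also have "\<dots> = C" by simp
    finally show ?thesis .
  qed
  have 1: "(`) g2 ` (`) g ` U = U"
  proof -
    have "(`) g2 ` (`) g ` U = (\<lambda>C. g2 ` g ` C) ` U" by (simp add: image_image)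
    also have "\<dots> = (\<lambda>C. C) ` U"
    proof (rule image_cong[OF refl])
      fix C assume "C \<in> U" thus "g2 ` g ` C = C" using cancel sub by blast
    qed
    also have "\<dots> = U" by simp
    finally show ?thesis .
  qed
  have 2: "(\<lambda>i. if i \<in> L then g2 ` (if h2 i \<in> L' then g ` f (hi (h2 i)) else {}) else {}) = f"
  proof
    fix i show "(if i \<in> L then g2 ` (if h2 i \<in> L' then g ` f (hi (h2 i)) else {}) else {}) = f i"
    proof (cases "i \<in> L")
      case True
      then show ?thesis using h2[OF True] cancel sub by auto
    next
      case False
      then show ?thesis using out by auto
    qed
  qed
  show ?thesis unfolding xe relab_def fst_conv snd_conv using 1 2 by simp
qed

lemma card_GLP_bij:
  assumes g: "bij_betw g A A'" and h: "bij_betw hi L' L"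
  shows "card (GLP m A L r) = card (GLP m A' L' r)"
proof -
  have gi: "bij_betw (inv_into A g) A' A" using bij_betw_inv_into[OF g] .
  have hii: "bij_betw (inv_into L' hi) L L'" using bij_betw_inv_into[OF h] .
  have "bij_betw (relab g hi L') (GLP m A L r) (GLP m A' L' r)"
  proof (rule bij_betw_byWitness[where f'="relab (inv_into A g) (inv_into L' hi) L"])
    show "\<forall>a\<in>GLP m A L r. relab (inv_into A g) (inv_into L' hi) L (relab g hi L' a) = a"
    proof
      fix a assume a: "a \<in> GLP m A L r"
      show "relab (inv_into A g) (inv_into L' hi) L (relab g hi L' a) = a"
        apply (rule relab_inv[OF a])
        using g h by (auto simp: bij_betw_def inv_into_into f_inv_into_f)
    qed
    show "\<forall>a\<in>GLP m A' L' r. relab g hi L' (relab (inv_into A g) (inv_into L' hi) L a) = a"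
    proof
      fix a assume a: "a \<in> GLP m A' L' r"
      show "relab g hi L' (relab (inv_into A g) (inv_into L' hi) L a) = a"
        apply (rule relab_inv[OF a])
        using g h by (auto simp: bij_betw_def inv_into_into f_inv_into_f)
    qed
    show "relab g hi L' ` GLP m A L r \<subseteq> GLP m A' L' r"
      using relab_in[OF g h] by auto
    show "relab (inv_into A g) (inv_into L' hi) L ` GLP m A' L' r \<subseteq> GLP m A L r"
      using relab_in[OF gi hii] by auto
  qed
  thus ?thesis by (rule bij_betw_same_card)
qed

lemma card_GLP_S:
  assumes "finite A" "finite L"
  shows "card (GLP m A L r) = S_le m (card A) (card L + 1) r"
proof -
  obtain g where g: "bij_betw g A {1..card A}"
    using finite_same_card_bij[OF assms(1), of "{1..card A}"] by auto
  obtain hi where h: "bij_betw hi {2..card L + 1} L"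
    using finite_same_card_bij[OF _ assms(2), of "{2..card L + 1}"] by auto
  show ?thesis unfolding S_le_def LP_GLP using card_GLP_bij[OF g h] .
qed

lemma part_remove:
  assumes P: "partition_on A P" and B: "B \<in> P"
  shows "partition_on (A - B) (P - {B})"
proof -
  have "disjnt B (\<Union>(P - {B}))"
    using partition_onD2[OF P] B by (auto simp: disjoint_def pairwise_def disjnt_def)
  moreover have "insert B (P - {B}) = P" using B by auto
  ultimately show ?thesis using partition_on_insert[of B "P - {B}" A] P by simp
qed

lemma part_add:
  assumes P: "partition_on (A - B) P" and "B \<subseteq> A" "B \<noteq> {}"
  shows "partition_on A (insert B P)"
proof -
  have "disjnt B (\<Union>P)" using partition_onD1[OF P] by (auto simp: disjnt_def)
  thus ?thesis using partition_on_insert[of B P A] assms by simp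
qed

lemma part_same:
  assumes P: "partition_on A P" and "C \<in> P" "D \<in> P" "x \<in> C" "x \<in> D"
  shows "C = D"
  using partition_onD2[OF P] assms(2-) by (auto simp: disjoint_def pairwise_def disjnt_def)

lemma GLP_blocks_sub:
  assumes "(U, f) \<in> GLP m A L r" "C \<in> U \<union> f ` L"
  shows "C \<subseteq> A"
  using assms unfolding GLP_def by (auto dest: partition_onD1)

lemma X_card:
  assumes fin: "finite A" and a: "a \<in> A" and T: "T \<subseteq> A - {a}" "card T \<le> m - 1"
    and m: "m \<ge> 1" and r: "r \<ge> 1"
  shows "card {x \<in> GLP m A L r. insert a T \<in> fst x} = card (GLP m (A - insert a T) L (r - 1))"
proof -
  define B where "B = insert a T"
  have finT: "finite T" using T fin by (auto intro: finite_subset)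
  have cB: "card B = card T + 1" unfolding B_def using T finT by (subst card_insert_disjoint) auto
  have Bsub: "B \<subseteq> A" "B \<noteq> {}" "a \<in> B" unfolding B_def using T a by auto
  define phi where "phi = (\<lambda>(U::nat set set, f::nat \<Rightarrow> nat set). (U - {B}, f))"
  define psi where "psi = (\<lambda>(U::nat set set, f::nat \<Rightarrow> nat set). (insert B U, f))"
  have "bij_betw phi {x \<in> GLP m A L r. B \<in> fst x} (GLP m (A - B) L (r - 1))"
  proof (rule bij_betw_byWitness[where f'=psi])
    show "\<forall>x\<in>{x \<in> GLP m A L r. B \<in> fst x}. psi (phi x) = x"
      unfolding phi_def psi_def by auto
    show "\<forall>y\<in>GLP m (A - B) L (r - 1). phi (psi y) = y"
    proof
      fix y assume y: "y \<in> GLP m (A - B) L (r - 1)"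
      obtain U f where ye: "y = (U, f)" by (cases y)
      have "B \<notin> U" using GLP_blocks_sub[of U f m "A - B" L "r - 1" B] y ye Bsub by auto
      thus "phi (psi y) = y" unfolding ye phi_def psi_def by auto
    qed
    show "phi ` {x \<in> GLP m A L r. B \<in> fst x} \<subseteq> GLP m (A - B) L (r - 1)"
    proof
      fix y assume "y \<in> phi ` {x \<in> GLP m A L r. B \<in> fst x}"
      then obtain U f where x: "(U, f) \<in> GLP m A L r" "B \<in> U" and ye: "y = (U - {B}, f)"
        unfolding phi_def by auto
      from x have P: "partition_on A (U \<union> f ` L)" and fU: "finite U" and cU: "card U = r"
        and inj: "inj_on f L" and dis: "U \<inter> f ` L = {}" and cb: "\<forall>B \<in> U \<union> f ` L. card B \<le> m"
        and out: "\<forall>i. i \<notin> L \<longrightarrow> f i = {}"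
        unfolding GLP_def by auto
      have "(U \<union> f ` L) - {B} = (U - {B}) \<union> f ` L" using dis x(2) by auto
      hence P': "partition_on (A - B) ((U - {B}) \<union> f ` L)"
        using part_remove[OF P, of B] x(2) by simp
      show "y \<in> GLP m (A - B) L (r - 1)" unfolding ye GLP_def
        using P' fU cU inj dis cb out x(2) by auto
    qed
    show "psi ` GLP m (A - B) L (r - 1) \<subseteq> {x \<in> GLP m A L r. B \<in> fst x}"
    proof
      fix x assume "x \<in> psi ` GLP m (A - B) L (r - 1)"
      then obtain U f where y: "(U, f) \<in> GLP m (A - B) L (r - 1)" and xe: "x = (insert B U, f)"
        unfolding psi_def by auto
      from y have P: "partition_on (A - B) (U \<union> f ` L)" and fU: "finite U" and cU: "card U = r - 1"
        and inj: "inj_on f L" and dis: "U \<inter> f ` L = {}" and cb: "\<forall>B \<in> U \<union> f ` L. card B \<le> m"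
        and out: "\<forall>i. i \<notin> L \<longrightarrow> f i = {}"
        unfolding GLP_def by auto
      have nB: "B \<notin> U \<union> f ` L" using GLP_blocks_sub[OF y, of B] Bsub by auto
      have P': "partition_on A (insert B U \<union> f ` L)"
        using part_add[OF P Bsub(1,2)] by simp
      have cU': "card (insert B U) = r" using cU fU nB r by simp
      have "card B \<le> m" using cB T m by simp
      then show "x \<in> {x \<in> GLP m A L r. B \<in> fst x}" unfolding xe GLP_def
        using P' fU cU' inj dis cb out nB by auto
    qed
  qed
  thus ?thesis unfolding B_def by (rule bij_betw_same_card)
qed

lemma Y_card:
  assumes fin: "finite A" and a: "a \<in> A" and T: "T \<subseteq> A - {a}" "card T \<le> m - 1"
    and m: "m \<ge> 1" and j: "j \<in> L"
  shows "card {x \<in> GLP m A L r. snd x j = insert a T} = card (GLP m (A - insert a T) (L - {j}) r)"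
proof -
  define B where "B = insert a T"
  have finT: "finite T" using T fin by (auto intro: finite_subset)
  have cB: "card B = card T + 1" unfolding B_def using T finT by (subst card_insert_disjoint) auto
  have Bsub: "B \<subseteq> A" "B \<noteq> {}" "a \<in> B" unfolding B_def using T a by auto
  define phi where "phi = (\<lambda>(U::nat set set, f::nat \<Rightarrow> nat set). (U, f(j := {})))"
  define psi where "psi = (\<lambda>(U::nat set set, f::nat \<Rightarrow> nat set). (U, f(j := B)))"
  have "bij_betw phi {x \<in> GLP m A L r. snd x j = B} (GLP m (A - B) (L - {j}) r)"
  proof (rule bij_betw_byWitness[where f'=psi])
    show "\<forall>x\<in>{x \<in> GLP m A L r. snd x j = B}. psi (phi x) = x"
      unfolding phi_def psi_def by auto
    show "\<forall>y\<in>GLP m (A - B) (L - {j}) r. phi (psi y) = y"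
    proof
      fix y assume y: "y \<in> GLP m (A - B) (L - {j}) r"
      obtain U f where ye: "y = (U, f)" by (cases y)
      have "f j = {}" using y ye unfolding GLP_def by auto
      thus "phi (psi y) = y" unfolding ye phi_def psi_def by (auto simp: fun_upd_idem)
    qed
    show "phi ` {x \<in> GLP m A L r. snd x j = B} \<subseteq> GLP m (A - B) (L - {j}) r"
    proof
      fix y assume "y \<in> phi ` {x \<in> GLP m A L r. snd x j = B}"
      then obtain U f where x: "(U, f) \<in> GLP m A L r" "f j = B" and ye: "y = (U, f(j := {}))"
        unfolding phi_def by auto
      from x have P: "partition_on A (U \<union> f ` L)" and fU: "finite U" and cU: "card U = r"
        and inj: "inj_on f L" and dis: "U \<inter> f ` L = {}" and cb: "\<forall>B \<in> U \<union> f ` L. card B \<le> m"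
        and out: "\<forall>i. i \<notin> L \<longrightarrow> f i = {}"
        unfolding GLP_def by auto
      have im: "(f(j := {})) ` (L - {j}) = f ` L - {B}"
        using inj j x(2) by (auto simp: inj_on_def)
      have BU: "B \<notin> U" using dis x(2) j by auto
      have "(U \<union> f ` L) - {B} = U \<union> (f(j := {})) ` (L - {j})" using im BU by auto
      hence P': "partition_on (A - B) (U \<union> (f(j := {})) ` (L - {j}))"
        using part_remove[OF P, of B] x(2) j by auto
      have inj': "inj_on (f(j := {})) (L - {j})"
        using inj_on_subset[OF inj, of "L - {j}"] by (auto simp: inj_on_def)
      have dis': "U \<inter> (f(j := {})) ` (L - {j}) = {}" using dis im by auto
      have cb': "\<forall>C \<in> U \<union> (f(j := {})) ` (L - {j}). card C \<le> m" using cb im by auto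
      have out': "\<forall>i. i \<notin> L - {j} \<longrightarrow> (f(j := {})) i = {}" using out by auto
      show "y \<in> GLP m (A - B) (L - {j}) r" unfolding ye GLP_def
        using P' fU cU inj' dis' cb' out' by auto
    qed
    show "psi ` GLP m (A - B) (L - {j}) r \<subseteq> {x \<in> GLP m A L r. snd x j = B}"
    proof
      fix x assume "x \<in> psi ` GLP m (A - B) (L - {j}) r"
      then obtain U f where y: "(U, f) \<in> GLP m (A - B) (L - {j}) r" and xe: "x = (U, f(j := B))"
        unfolding psi_def by auto
      from y have P: "partition_on (A - B) (U \<union> f ` (L - {j}))" and fU: "finite U" and cU: "card U = r"
        and inj: "inj_on f (L - {j})" and dis: "U \<inter> f ` (L - {j}) = {}"
        and cb: "\<forall>B \<in> U \<union> f ` (L - {j}). card B \<le> m"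
        and out: "\<forall>i. i \<notin> L - {j} \<longrightarrow> f i = {}"
        unfolding GLP_def by auto
      have nB: "B \<notin> U \<union> f ` (L - {j})" using GLP_blocks_sub[OF y, of B] Bsub by auto
      have im: "(f(j := B)) ` L = insert B (f ` (L - {j}))" using j by auto
      have P': "partition_on A (U \<union> (f(j := B)) ` L)"
        using part_add[OF P Bsub(1,2)] im by simp
      have inj': "inj_on (f(j := B)) L"
      proof -
        have "inj_on (f(j := B)) (L - {j})" using inj by (auto simp: inj_on_def)
        moreover have "(f(j := B)) j \<notin> (f(j := B)) ` (L - {j})" using nB by auto
        moreover have "L = insert j (L - {j})" using j by auto
        ultimately show ?thesis by (metis inj_on_insert Diff_idemp)
      qed
      have dis': "U \<inter> (f(j := B)) ` L = {}" using dis im nB by auto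
      have "card B \<le> m" using cB T m by simp
      hence cb': "\<forall>C \<in> U \<union> (f(j := B)) ` L. card C \<le> m" using cb im by auto
      have out': "\<forall>i. i \<notin> L \<longrightarrow> (f(j := B)) i = {}" using out j by auto
      show "x \<in> {x \<in> GLP m A L r. snd x j = B}" unfolding xe GLP_def
        using P' fU cU inj' dis' cb' out' by auto
    qed
  qed
  thus ?thesis unfolding B_def by (rule bij_betw_same_card)
qed

lemma decomp:
  assumes fin: "finite A" and a: "a \<in> A" and finL: "finite L" and m: "m \<ge> 1" and r: "r \<ge> 1"
  shows "card (GLP m A L r) = (\<Sum>T \<in> {T. T \<subseteq> A - {a} \<and> card T \<le> m - 1}.
     S_le m (card A - 1 - card T) (card L + 1) (r - 1) + card L * S_le m (card A - 1 - card T) (card L) r)"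
proof -
  define G where "G = GLP m A L r"
  define Ts where "Ts = {T. T \<subseteq> A - {a} \<and> card T \<le> m - 1}"
  define X where "X = (\<lambda>T. {x \<in> G. insert a T \<in> fst x})"
  define Y where "Y = (\<lambda>T j. {x \<in> G. snd x j = insert a T})"
  have finG: "finite G" unfolding G_def using finite_GLP[OF fin finL] .
  have finTs: "finite Ts" unfolding Ts_def using fin by (auto intro: finite_subset[of _ "Pow A"])
  have blocks: "C \<in> fst x \<union> snd x ` L \<Longrightarrow> D \<in> fst x \<union> snd x ` L \<Longrightarrow> y \<in> C \<Longrightarrow> y \<in> D \<Longrightarrow> x \<in> G \<Longrightarrow> C = D"
    for x C D y
    using part_same[of A "fst x \<union> snd x ` L" C D y] unfolding G_def GLP_def by auto
  have split: "G = (\<Union>T\<in>Ts. X T \<union> (\<Union>j\<in>L. Y T j))"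
  proof
    show "(\<Union>T\<in>Ts. X T \<union> (\<Union>j\<in>L. Y T j)) \<subseteq> G" unfolding X_def Y_def by auto
    show "G \<subseteq> (\<Union>T\<in>Ts. X T \<union> (\<Union>j\<in>L. Y T j))"
    proof
      fix x assume x: "x \<in> G"
      obtain U f where xe: "x = (U, f)" by (cases x)
      from x xe have P: "partition_on A (U \<union> f ` L)" and cb: "\<forall>B \<in> U \<union> f ` L. card B \<le> m"
        unfolding G_def GLP_def by auto
      obtain C where C: "C \<in> U \<union> f ` L" "a \<in> C" using partition_onD1[OF P] a by auto
      have CA: "C \<subseteq> A" using C partition_onD1[OF P] by auto
      hence finC: "finite C" using fin by (rule finite_subset)
      define T where "T = C - {a}"
      have CT: "C = insert a T" unfolding T_def using C by auto
      have "card T = card C - 1" unfolding T_def using C finC by simp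
      moreover have "card C \<le> m" using cb C by blast
      ultimately have "T \<in> Ts" unfolding Ts_def T_def using CA C by auto
      moreover have "x \<in> X T \<union> (\<Union>j\<in>L. Y T j)"
        using C x xe CT unfolding X_def Y_def by auto
      ultimately show "x \<in> (\<Union>T\<in>Ts. X T \<union> (\<Union>j\<in>L. Y T j))" by blast
    qed
  qed
  have aT: "a \<notin> T" if "T \<in> Ts" for T using that unfolding Ts_def by auto
  have "card G = (\<Sum>T\<in>Ts. card (X T \<union> (\<Union>j\<in>L. Y T j)))"
    unfolding split
  proof (rule card_UN_disjoint[OF finTs])
    show "\<forall>T\<in>Ts. finite (X T \<union> (\<Union>j\<in>L. Y T j))"
      using finG finL unfolding X_def Y_def by auto
    show "\<forall>T\<in>Ts. \<forall>T'\<in>Ts. T \<noteq> T' \<longrightarrow> (X T \<union> (\<Union>j\<in>L. Y T j)) \<inter> (X T' \<union> (\<Union>j\<in>L. Y T' j)) = {}"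
    proof (intro ballI impI)
      fix T T' assume T: "T \<in> Ts" and T': "T' \<in> Ts" and ne: "T \<noteq> T'"
      show "(X T \<union> (\<Union>j\<in>L. Y T j)) \<inter> (X T' \<union> (\<Union>j\<in>L. Y T' j)) = {}"
      proof (rule ccontr)
        assume "\<not> ?thesis"
        then obtain x where x: "x \<in> G" "insert a T \<in> fst x \<union> snd x ` L" "insert a T' \<in> fst x \<union> snd x ` L"
          unfolding X_def Y_def by (auto; metis image_eqI)
        have "insert a T = insert a T'" using blocks[OF x(2) x(3) _ _ x(1), of a] by simp
        hence "T = T'" using aT[OF T] aT[OF T'] by (metis Diff_insert_absorb)
        with ne show False by simp
      qed
    qed
  qed
  also have "\<dots> = (\<Sum>T\<in>Ts. S_le m (card A - 1 - card T) (card L + 1) (r - 1) + card L * S_le m (card A - 1 - card T) (card L) r)"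
  proof (rule sum.cong[OF refl])
    fix T assume T: "T \<in> Ts"
    have TA: "T \<subseteq> A - {a}" "card T \<le> m - 1" using T unfolding Ts_def by auto
    have finT: "finite T" using TA fin by (auto intro: finite_subset)
    have cAT: "card (A - insert a T) = card A - 1 - card T"
    proof -
      have "card (insert a T) = card T + 1" using TA finT by (subst card_insert_disjoint) auto
      moreover have "card (A - insert a T) = card A - card (insert a T)"
        using TA a finT by (intro card_Diff_subset) auto
      ultimately show ?thesis by simp
    qed
    have fX: "finite (X T)" and fY: "\<And>j. finite (Y T j)" using finG unfolding X_def Y_def by auto
    have d1: "X T \<inter> (\<Union>j\<in>L. Y T j) = {}"
      unfolding X_def Y_def G_def GLP_def by (auto; blast)
    have d2: "\<forall>i\<in>L. \<forall>j\<in>L. i \<noteq> j \<longrightarrow> Y T i \<inter> Y T j = {}"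
      unfolding Y_def G_def GLP_def by (auto simp: inj_on_def)
    have "card (X T \<union> (\<Union>j\<in>L. Y T j)) = card (X T) + card (\<Union>j\<in>L. Y T j)"
      using fX fY finL d1 by (intro card_Un_disjoint) auto
    also have "card (\<Union>j\<in>L. Y T j) = (\<Sum>j\<in>L. card (Y T j))"
      using fY finL d2 by (intro card_UN_disjoint) auto
    also have "\<dots> = (\<Sum>j\<in>L. S_le m (card A - 1 - card T) (card L) r)"
    proof (rule sum.cong[OF refl])
      fix j assume j: "j \<in> L"
      have "card (Y T j) = card (GLP m (A - insert a T) (L - {j}) r)"
        unfolding Y_def G_def using Y_card[OF fin a TA m j] .
      also have "\<dots> = S_le m (card (A - insert a T)) (card (L - {j}) + 1) r"
        using fin finL by (intro card_GLP_S) auto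
      also have "card (L - {j}) + 1 = card L" using j finL
        by (simp add: card_gt_0_iff) (metis card_gt_0_iff empty_iff Suc_pred)
      finally show "card (Y T j) = S_le m (card A - 1 - card T) (card L) r" using cAT by simp
    qed
    also have "card (X T) = S_le m (card A - 1 - card T) (card L + 1) (r - 1)"
    proof -
      have "card (X T) = card (GLP m (A - insert a T) L (r - 1))"
        unfolding X_def G_def using X_card[OF fin a TA m r] .
      also have "\<dots> = S_le m (card (A - insert a T)) (card L + 1) (r - 1)"
        using fin finL by (intro card_GLP_S) auto
      finally show ?thesis using cAT by simp
    qed
    finally show "card (X T \<union> (\<Union>j\<in>L. Y T j)) = S_le m (card A - 1 - card T) (card L + 1) (r - 1) + card L * S_le m (card A - 1 - card T) (card L) r"
      by simp
  qed
  finally show ?thesis unfolding G_def Ts_def .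
qed

lemma regroup:
  fixes F :: "nat \<Rightarrow> nat"
  assumes D: "finite D"
  shows "(\<Sum>T \<in> {T. T \<subseteq> D \<and> card T \<le> M}. F (card T)) = (\<Sum>i = 0..M. (card D choose i) * F i)"
proof -
  have fin: "finite {T. T \<subseteq> D \<and> card T \<le> M}" using D by (auto intro: finite_subset[of _ "Pow D"])
  have "(\<Sum>T \<in> {T. T \<subseteq> D \<and> card T \<le> M}. F (card T)) =
    (\<Sum>i = 0..M. \<Sum>T \<in> {T. T \<in> {T. T \<subseteq> D \<and> card T \<le> M} \<and> card T = i}. F (card T))"
    by (rule sum.group[symmetric, OF fin]) auto
  also have "\<dots> = (\<Sum>i = 0..M. (card D choose i) * F i)"
  proof (rule sum.cong[OF refl])
    fix i assume i: "i \<in> {0..M}"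
    have e: "{T. T \<in> {T. T \<subseteq> D \<and> card T \<le> M} \<and> card T = i} = {T. T \<subseteq> D \<and> card T = i}"
      using i by auto
    have "(\<Sum>T \<in> {T. T \<subseteq> D \<and> card T = i}. F (card T)) = (\<Sum>T \<in> {T. T \<subseteq> D \<and> card T = i}. F i)"
      by (rule sum.cong) auto
    also have "\<dots> = card {T. T \<subseteq> D \<and> card T = i} * F i" by simp
    finally show "(\<Sum>T \<in> {T. T \<in> {T. T \<subseteq> D \<and> card T \<le> M} \<and> card T = i}. F (card T)) = (card D choose i) * F i"
      unfolding e n_subsets[OF D] .
  qed
  finally show ?thesis .
qed

theorem mainTheorem3:
  fixes n m k r :: nat
  assumes "n \<ge> 1" "m \<ge> 1" "k \<ge> 1" "r \<ge> 1"
  shows "S_le m n k r =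
    (\<Sum>i = 0..m - 1. (n - 1 choose i) *
        ((k - 1) * S_le m (n - i - 1) (k - 1) r + S_le m (n - i - 1) k (r - 1)))"
proof -
  let ?F = "\<lambda>i. S_le m (card {1..n} - 1 - i) (card {2..k} + 1) (r - 1) + card {2..k} * S_le m (card {1..n} - 1 - i) (card {2..k}) r"
  have "S_le m n k r = card (GLP m {1..n} {2..k} r)" unfolding S_le_def LP_GLP ..
  also have "\<dots> = (\<Sum>T \<in> {T. T \<subseteq> {1..n} - {n} \<and> card T \<le> m - 1}. ?F (card T))"
    using assms by (intro decomp) auto
  also have "\<dots> = (\<Sum>i = 0..m - 1. (card ({1..n} - {n}) choose i) * ?F i)"
    by (rule regroup) simp
  also have "\<dots> = (\<Sum>i = 0..m - 1. (n - 1 choose i) *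
        ((k - 1) * S_le m (n - i - 1) (k - 1) r + S_le m (n - i - 1) k (r - 1)))"
  proof (rule sum.cong[OF refl])
    fix i
    have "card ({1..n} - {n}) = n - 1" using assms by simp
    moreover have "card {2..k} = k - 1" "card {2..k} + 1 = k" using assms by auto
    moreover have "card {1..n} - 1 - i = n - i - 1" by simp
    ultimately show "(card ({1..n} - {n}) choose i) * ?F i = (n - 1 choose i) *
        ((k - 1) * S_le m (n - i - 1) (k - 1) r + S_le m (n - i - 1) k (r - 1))"
      by (simp add: add.commute)
  qed
  finally show ?thesis .
qed

end
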